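(* Let $f^i_m:\mathbb{R}^d\to\mathbb{R}$ ($m\in[M]$, $i\in[n]$) be differentiable, convex and $L$-smooth, with $f_m=\frac1n\sum_i f^i_m$, $f=\frac1M\sum_m f_m$, and let $x_*$ be a minimizer of $f$. Fix $x_t\in\mathbb{R}^d$ and $\gamma\le\frac{1}{2Ln}$. For each $m\in[M]$ let $\pi_m$ be a uniformly random permutation of $[n]$ and define $x^0_{t,m}=x_t$, $x^{i+1}_{t,m}=x^i_{t,m}-\gamma\nabla f_m^{\pi_m^i}(x^i_{t,m})$ for $i=0,\dots,n-1$. Then $$\frac{1}{Mn}\sum_{m=1}^M\sum_{i=0}^{n-1}\mathbb{E}\|x_t-x^i_{t,m}\|^2\le 8\gamma^2n^2L\big(f(x_t)-f(x_* )\big)+2\gamma^2n^2\frac1M\sum_{m=1}^M\|\nabla f_m(x_* )\|^2+2\gamma^2n\frac1M\sum_{m=1}^M\sigma_{*,m}^2,$$ where the expectation is over the permutations.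
   Context: $[k]=\{1,\dots,k\}$. $L$-smooth: $\|\nabla h(x)-\nabla h(y)\|\le L\|x-y\|$ for all $x,y$. $\sigma_{*,m}^2=\frac1n\sum_{i=1}^n\|\nabla f^i_m(x_* )\|^2$. Permutations $\pi_m=(\pi_m^0,\dots,\pi_m^{n-1})$ are indexed from $0$. *)

theory Defs
  imports "HOL-Probability.Probability"
begin

fun local_iter :: "real \<Rightarrow> (nat \<Rightarrow> 'a::real_normed_vector \<Rightarrow> 'a) \<Rightarrow> (nat \<Rightarrow> nat) \<Rightarrow> 'a \<Rightarrow> nat \<Rightarrow> 'a" where
  "local_iter \<gamma> g \<pi> x 0 = x"
| "local_iter \<gamma> g \<pi> x (Suc i) =
     local_iter \<gamma> g \<pi> x i - \<gamma> *\<^sub>R g (\<pi> i) (local_iter \<gamma> g \<pi> x i)"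

definition unif_perm :: "nat \<Rightarrow> (nat \<Rightarrow> nat) pmf" where
  "unif_perm n = pmf_of_set {\<pi>. \<pi> permutes {..<n}}"

end

theory Submission
  imports Defs
begin


lemma local_iter_sum:
  "local_iter \<gamma> G \<pi> x i = x - \<gamma> *\<^sub>R (\<Sum>j<i. G (\<pi> j) (local_iter \<gamma> G \<pi> x j))"
  by (induction i) (simp_all add: algebra_simps)

lemma norm_sum_sq:
  fixes d :: "nat \<Rightarrow> 'a::real_normed_vector"
  shows "(norm (\<Sum>j\<in>I. d j))\<^sup>2 \<le> real (card I) * (\<Sum>j\<in>I. (norm (d j))\<^sup>2)"
proof -
  have "(norm (\<Sum>j\<in>I. d j))\<^sup>2 \<le> (\<Sum>j\<in>I. norm (d j))\<^sup>2"
    by (rule power_mono[OF norm_sum]) simp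
  also have "\<dots> \<le> (\<Sum>j\<in>I. (norm (d j))\<^sup>2) * card I"
    by (rule sum_squared_le_sum_of_squares)
  finally show ?thesis by (simp add: mult.commute)
qed

lemma sq_add_le2:
  fixes u v :: "'a::real_normed_vector"
  shows "(norm (u+v))\<^sup>2 \<le> 2*(norm u)\<^sup>2 + 2*(norm v)\<^sup>2"
proof -
  have "norm (u+v) \<le> norm u + norm v" by (rule norm_triangle_ineq)
  hence "(norm (u+v))\<^sup>2 \<le> (norm u + norm v)\<^sup>2" by (simp add: power_mono)
  moreover have "(norm u + norm v)\<^sup>2 \<le> 2*(norm u)\<^sup>2 + 2*(norm v)\<^sup>2"
    by (smt (verit) power2_sum sum_squares_bound zero_le_power2 power2_diff)
  ultimately show ?thesis by linarith
qed

lemma sq_add_le3: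
  fixes u v :: "'a::real_normed_vector"
  shows "(norm (u+v))\<^sup>2 \<le> 3*(norm u)\<^sup>2 + 3/2*(norm v)\<^sup>2"
proof -
  have "norm (u+v) \<le> norm u + norm v" by (rule norm_triangle_ineq)
  hence "(norm (u+v))\<^sup>2 \<le> (norm u + norm v)\<^sup>2" by (simp add: power_mono)
  moreover have "(norm u + norm v)\<^sup>2 \<le> 3*(norm u)\<^sup>2 + 3/2*(norm v)\<^sup>2"
  proof -
    have "0 \<le> (2*norm u - norm v)\<^sup>2" by simp
    thus ?thesis by (simp add: power2_eq_square algebra_simps)
  qed
  ultimately show ?thesis by linarith
qed

lemma convex_grad_ineq:
  fixes h :: "'a::real_inner \<Rightarrow> real"
  assumes cv: "convex_on UNIV h"
    and d: "\<And>x. (h has_derivative (\<lambda>v. G x \<bullet> v)) (at x)"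
  shows "h y + G y \<bullet> (z - y) \<le> h z"
proof -
  define \<psi> where "\<psi> t = h (y + t *\<^sub>R (z - y))" for t :: real
  have cvp: "convex_on UNIV \<psi>"
  proof (rule convex_onI)
    fix t a b :: real assume t: "0 < t" "t < 1"
    have "y + ((1 - t) *\<^sub>R a + t *\<^sub>R b) *\<^sub>R (z - y)
        = (1 - t) *\<^sub>R (y + a *\<^sub>R (z - y)) + t *\<^sub>R (y + b *\<^sub>R (z - y))"
      by (simp add: algebra_simps)
    thus "\<psi> ((1 - t) *\<^sub>R a + t *\<^sub>R b) \<le> (1 - t) * \<psi> a + t * \<psi> b"
      unfolding \<psi>_def using convex_onD[OF cv, of t] t by simp
  qed simp
  have "((\<lambda>t. y + t *\<^sub>R (z - y)) has_derivative (\<lambda>t. t *\<^sub>R (z - y))) (at 0)"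
    by (auto intro!: derivative_eq_intros)
  from has_derivative_compose[OF this d]
  have "(\<psi> has_derivative (\<lambda>t. G y \<bullet> (t *\<^sub>R (z - y)))) (at 0)"
    unfolding \<psi>_def by (simp add: o_def)
  moreover have "(\<lambda>t. G y \<bullet> (t *\<^sub>R (z - y))) = (*) (G y \<bullet> (z - y))"
    by (rule ext) simp
  ultimately have "(\<psi> has_field_derivative (G y \<bullet> (z - y))) (at 0 within UNIV)"
    unfolding has_field_derivative_def by simp
  from convex_on_imp_above_tangent[OF cvp _ _ _ this, of 1]
  have "\<psi> 1 - \<psi> 0 \<ge> G y \<bullet> (z - y)" by simp
  thus ?thesis unfolding \<psi>_def by simp
qed

lemma line_deriv:
  fixes h :: "'a::real_inner \<Rightarrow> real"
  assumes d: "\<And>x. (h has_derivative (\<lambda>v. G x \<bullet> v)) (at x)"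
  shows "((\<lambda>t. h (u + t *\<^sub>R v)) has_real_derivative (G (u + t *\<^sub>R v) \<bullet> v)) (at t)"
proof -
  have "((\<lambda>t. u + t *\<^sub>R v) has_derivative (\<lambda>s. s *\<^sub>R v)) (at t)"
    by (auto intro!: derivative_eq_intros)
  from has_derivative_compose[OF this d]
  have "((\<lambda>t. h (u + t *\<^sub>R v)) has_derivative (\<lambda>s. G (u + t *\<^sub>R v) \<bullet> (s *\<^sub>R v))) (at t)"
    by (simp add: o_def)
  moreover have "(\<lambda>s. G (u + t *\<^sub>R v) \<bullet> (s *\<^sub>R v)) = (*) (G (u + t *\<^sub>R v) \<bullet> v)"
    by (rule ext) simp
  ultimately show ?thesis unfolding has_field_derivative_def by simp
qed

lemma descent:
  fixes h :: "'a::real_inner \<Rightarrow> real"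
  assumes d: "\<And>x. (h has_derivative (\<lambda>v. G x \<bullet> v)) (at x)"
    and sm: "\<And>x y. norm (G x - G y) \<le> L * norm (x - y)"
  shows "h (u + v) \<le> h u + G u \<bullet> v + L/2 * (norm v)\<^sup>2"
proof -
  define ch where "ch t = h (u + t *\<^sub>R v) - t * (G u \<bullet> v) - L/2 * t\<^sup>2 * (norm v)\<^sup>2" for t
  have D: "(ch has_real_derivative (G (u + t *\<^sub>R v) \<bullet> v - G u \<bullet> v - L * t * (norm v)\<^sup>2)) (at t)" for t
    unfolding ch_def
    by (rule derivative_eq_intros line_deriv[OF d] | simp)+
  have "ch 1 \<le> ch 0"
  proof (rule DERIV_nonpos_imp_nonincreasing[of 0 1])
    fix t :: real assume t: "0 \<le> t" "t \<le> 1"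
    have "G (u + t *\<^sub>R v) \<bullet> v - G u \<bullet> v = (G (u + t *\<^sub>R v) - G u) \<bullet> v"
      by (simp add: inner_diff_left)
    also have "\<dots> \<le> norm (G (u + t *\<^sub>R v) - G u) * norm v"
      by (rule norm_cauchy_schwarz)
    also have "\<dots> \<le> (L * norm (t *\<^sub>R v)) * norm v"
      using sm[of "u + t *\<^sub>R v" u] by (simp add: mult_right_mono)
    also have "\<dots> = L * t * (norm v)\<^sup>2" using t by (simp add: power2_eq_square)
    finally have "G (u + t *\<^sub>R v) \<bullet> v - G u \<bullet> v - L * t * (norm v)\<^sup>2 \<le> 0" by simp
    with D[of t] show "\<exists>y. DERIV ch t :> y \<and> y \<le> 0" by blast
  qed simp
  thus ?thesis unfolding ch_def by simp
qed

lemma bregman: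
  fixes h :: "'a::real_inner \<Rightarrow> real"
  assumes cv: "convex_on UNIV h"
    and d: "\<And>x. (h has_derivative (\<lambda>v. G x \<bullet> v)) (at x)"
    and sm: "\<And>x y. norm (G x - G y) \<le> L * norm (x - y)"
    and L: "L > 0"
  shows "(norm (G x - G y))\<^sup>2 \<le> 2 * L * (h x - h y - G y \<bullet> (x - y))"
proof -
  define w where "w = G x - G y"
  define v where "v = - (1/L) *\<^sub>R w"
  have 1: "h (x + v) \<le> h x + G x \<bullet> v + L/2 * (norm v)\<^sup>2"
    by (rule descent[OF d sm])
  have 2: "h y + G y \<bullet> (x + v - y) \<le> h (x + v)"
    by (rule convex_grad_ineq[OF cv d])
  have "G x \<bullet> v - G y \<bullet> v = w \<bullet> v" unfolding w_def by (simp add: inner_diff_left)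
  also have "\<dots> = - (norm w)\<^sup>2 / L" unfolding v_def by (simp add: power2_norm_eq_inner)
  finally have 3: "G x \<bullet> v - G y \<bullet> v = - (norm w)\<^sup>2 / L" .
  have 4: "L/2 * (norm v)\<^sup>2 = (norm w)\<^sup>2 / (2*L)"
    unfolding v_def using L by (simp add: power2_eq_square field_simps)
  have "h y + G y \<bullet> (x - y) \<le> h x - (norm w)\<^sup>2 / (2*L)"
    using 1 2 3 4 by (simp add: inner_diff_right inner_add_right field_simps)
  hence "(norm w)\<^sup>2 / (2*L) \<le> h x - h y - G y \<bullet> (x - y)" by linarith
  thus ?thesis unfolding w_def using L by (simp add: field_simps)
qed



lemma perm_bij_minus:
  assumes p: "p permutes S" and j: "j \<in> S"
  shows "bij_betw p (S - {j}) (S - {p j})"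
proof -
  have b: "bij_betw p S S" using p by (rule permutes_imp_bij)
  hence i: "inj_on p S" by (simp add: bij_betw_def)
  have "p ` (S - {j}) = p ` S - p ` {j}" using i j by (intro inj_on_image_set_diff) auto
  also have "\<dots> = S - {p j}" using b by (simp add: bij_betw_def)
  finally show ?thesis using i by (simp add: bij_betw_def inj_on_diff)
qed

lemma perm_single:
  fixes h :: "nat \<Rightarrow> real"
  assumes j: "j < n"
  shows "real n * (\<Sum>\<pi>\<in>{\<pi>. \<pi> permutes {..<n}}. h (\<pi> j))
       = real (card {\<pi>. \<pi> permutes {..<n}}) * (\<Sum>p<n. h p)"
proof -
  let ?P = "{\<pi>. \<pi> permutes {..<n}}"
  have inv: "(\<Sum>\<pi>\<in>?P. h (\<pi> j')) = (\<Sum>\<pi>\<in>?P. h (\<pi> j))" if "j' < n" for j'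
  proof -
    have q: "Transposition.transpose j' j permutes {..<n}"
      using that j by (intro permutes_swap_id) auto
    show ?thesis
      using sum_permutations_compose_right[OF q, of "\<lambda>\<pi>. h (\<pi> j')"] by simp
  qed
  have "(\<Sum>j'<n. \<Sum>\<pi>\<in>?P. h (\<pi> j')) = real n * (\<Sum>\<pi>\<in>?P. h (\<pi> j))"
    using inv by simp
  moreover have "(\<Sum>j'<n. \<Sum>\<pi>\<in>?P. h (\<pi> j')) = (\<Sum>\<pi>\<in>?P. \<Sum>j'<n. h (\<pi> j'))"
    by (rule sum.swap)
  moreover have "(\<Sum>j'<n. h (\<pi> j')) = (\<Sum>p<n. h p)" if "\<pi> \<in> ?P" for \<pi>
    using that by (intro sum.reindex_bij_betw) (auto intro: permutes_imp_bij)
  ultimately show ?thesis by simp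
qed

lemma perm_pair:
  fixes h :: "nat \<Rightarrow> nat \<Rightarrow> real"
  assumes j: "j < n" and k: "k < n" and jk: "j \<noteq> k"
  shows "real n * (real n - 1) * (\<Sum>\<pi>\<in>{\<pi>. \<pi> permutes {..<n}}. h (\<pi> j) (\<pi> k))
       = real (card {\<pi>. \<pi> permutes {..<n}}) * (\<Sum>p<n. \<Sum>q\<in>{..<n}-{p}. h p q)"
proof -
  let ?P = "{\<pi>. \<pi> permutes {..<n}}"
  have inv: "(\<Sum>\<pi>\<in>?P. h (\<pi> j') (\<pi> k')) = (\<Sum>\<pi>\<in>?P. h (\<pi> j) (\<pi> k))"
    if "j' < n" "k' < n" "j' \<noteq> k'" for j' k'
  proof -
    define t1 where "t1 = Transposition.transpose j' j"
    define k1 where "k1 = t1 k'"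
    define t2 where "t2 = Transposition.transpose k1 k"
    have k1n: "k1 < n" unfolding k1_def t1_def using that j
      by (cases "k' = j"; cases "j' = j") auto
    have k1j: "k1 \<noteq> j" unfolding k1_def t1_def using that
      by (cases "k' = j"; cases "j' = j") auto
    have q1: "t1 permutes {..<n}" unfolding t1_def
      using that j by (intro permutes_swap_id) auto
    have q2: "t2 permutes {..<n}" unfolding t2_def
      using k1n k by (intro permutes_swap_id) auto
    have q: "t2 \<circ> t1 permutes {..<n}" using q1 q2 by (rule permutes_compose)
    have e1: "(t2 \<circ> t1) j' = j" unfolding t2_def t1_def using k1j jk
      by simp
    have e2: "(t2 \<circ> t1) k' = k" unfolding t2_def k1_def by simp
    show ?thesis
      using sum_permutations_compose_right[OF q, of "\<lambda>\<pi>. h (\<pi> j') (\<pi> k')"] e1 e2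
      by (simp del: comp_apply add: comp_assoc) (simp add: o_def)
  qed
  have c: "card ({..<n} - {j'}) = n - 1" if "j' < n" for j'
    using that by simp
  have "(\<Sum>j'<n. \<Sum>k'\<in>{..<n}-{j'}. \<Sum>\<pi>\<in>?P. h (\<pi> j') (\<pi> k'))
      = (\<Sum>j'<n. real (n - 1) * (\<Sum>\<pi>\<in>?P. h (\<pi> j) (\<pi> k)))"
    using inv c by (intro sum.cong refl) auto
  also have "\<dots> = real n * (real n - 1) * (\<Sum>\<pi>\<in>?P. h (\<pi> j) (\<pi> k))"
    using j by (simp add: of_nat_diff)
  finally have L: "(\<Sum>j'<n. \<Sum>k'\<in>{..<n}-{j'}. \<Sum>\<pi>\<in>?P. h (\<pi> j') (\<pi> k'))
      = real n * (real n - 1) * (\<Sum>\<pi>\<in>?P. h (\<pi> j) (\<pi> k))" .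
  have "(\<Sum>j'<n. \<Sum>k'\<in>{..<n}-{j'}. \<Sum>\<pi>\<in>?P. h (\<pi> j') (\<pi> k'))
      = (\<Sum>\<pi>\<in>?P. \<Sum>j'<n. \<Sum>k'\<in>{..<n}-{j'}. h (\<pi> j') (\<pi> k'))"
    by (simp add: sum.swap[of _ ?P])
  also have "\<dots> = (\<Sum>\<pi>\<in>?P. \<Sum>p<n. \<Sum>q\<in>{..<n}-{p}. h p q)"
  proof (rule sum.cong[OF refl])
    fix \<pi> assume "\<pi> \<in> ?P"
    hence pp: "\<pi> permutes {..<n}" by simp
    have "(\<Sum>k'\<in>{..<n}-{j'}. h (\<pi> j') (\<pi> k')) = (\<Sum>q\<in>{..<n}-{\<pi> j'}. h (\<pi> j') q)"
      if "j' < n" for j'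
      using perm_bij_minus[OF pp, of j'] that
      by (intro sum.reindex_bij_betw) auto
    hence "(\<Sum>j'<n. \<Sum>k'\<in>{..<n}-{j'}. h (\<pi> j') (\<pi> k'))
        = (\<Sum>j'<n. (\<lambda>p. \<Sum>q\<in>{..<n}-{p}. h p q) (\<pi> j'))" by simp
    also have "\<dots> = (\<Sum>p<n. \<Sum>q\<in>{..<n}-{p}. h p q)"
      using pp by (intro sum.reindex_bij_betw) (rule permutes_imp_bij)
    finally show "(\<Sum>j'<n. \<Sum>k'\<in>{..<n}-{j'}. h (\<pi> j') (\<pi> k'))
        = (\<Sum>p<n. \<Sum>q\<in>{..<n}-{p}. h p q)" .
  qed
  also have "\<dots> = real (card ?P) * (\<Sum>p<n. \<Sum>q\<in>{..<n}-{p}. h p q)" by simp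
  finally show ?thesis using L by simp
qed



lemma sq_sum_expand:
  fixes b :: "nat \<Rightarrow> 'a::real_inner"
  assumes "finite I"
  shows "(norm (\<Sum>j\<in>I. b j))\<^sup>2 = (\<Sum>j\<in>I. (norm (b j))\<^sup>2 + (\<Sum>k\<in>I-{j}. b j \<bullet> b k))"
proof -
  have "(norm (\<Sum>j\<in>I. b j))\<^sup>2 = (\<Sum>j\<in>I. \<Sum>k\<in>I. b j \<bullet> b k)"
    by (simp add: power2_norm_eq_inner inner_sum_left inner_sum_right, rule sum.swap)
  also have "\<dots> = (\<Sum>j\<in>I. (norm (b j))\<^sup>2 + (\<Sum>k\<in>I-{j}. b j \<bullet> b k))"
  proof (rule sum.cong[OF refl])
    fix j assume "j \<in> I"
    thus "(\<Sum>k\<in>I. b j \<bullet> b k) = (norm (b j))\<^sup>2 + (\<Sum>k\<in>I-{j}. b j \<bullet> b k)"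
      using assms by (simp add: sum.remove power2_norm_eq_inner)
  qed
  finally show ?thesis .
qed

lemma div_by_aux: "(x::real) > 0 \<Longrightarrow> x * s = c \<Longrightarrow> s = c / x"
  by (simp add: field_simps)

lemma perm_var:
  fixes a :: "nat \<Rightarrow> 'a::real_inner"
  assumes i: "i \<le> n" and n: "n \<ge> 1"
  shows "(\<Sum>\<pi>\<in>{\<pi>. \<pi> permutes {..<n}}. (norm (\<Sum>j<i. a (\<pi> j)))\<^sup>2)
     \<le> real (card {\<pi>. \<pi> permutes {..<n}}) *
        (real i / real n * (\<Sum>p<n. (norm (a p))\<^sup>2) + (real i)\<^sup>2 / (real n)\<^sup>2 * (norm (\<Sum>p<n. a p))\<^sup>2)"
proof -
  let ?P = "{\<pi>. \<pi> permutes {..<n}}"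
  define cP where "cP = real (card ?P)"
  define A where "A = (\<Sum>p<n. (norm (a p))\<^sup>2)"
  define B where "B = (norm (\<Sum>p<n. a p))\<^sup>2"
  define C where "C = (\<Sum>p<n. \<Sum>q\<in>{..<n}-{p}. a p \<bullet> a q)"
  have BAC: "B = A + C" unfolding B_def A_def C_def
    by (simp add: sq_sum_expand sum.distrib)
  have cP0: "cP \<ge> 0" unfolding cP_def by simp
  have s1: "(\<Sum>\<pi>\<in>?P. (norm (a (\<pi> j)))\<^sup>2) = cP * A / n" if "j < i" for j
    using perm_single[of j n "\<lambda>p. (norm (a p))\<^sup>2"] that i n
    unfolding cP_def A_def by (simp add: field_simps)
  have s2: "(\<Sum>\<pi>\<in>?P. a (\<pi> j) \<bullet> a (\<pi> k)) = cP * C / (real n * (real n - 1))"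
    if "j < i" "k \<in> {..<i}-{j}" for j k
  proof -
    have "n \<ge> 2" using that i by auto
    hence pos: "real n * (real n - 1) > 0" by simp
    have "real n * (real n - 1) * (\<Sum>\<pi>\<in>?P. a (\<pi> j) \<bullet> a (\<pi> k)) = cP * C"
      using perm_pair[of j n k "\<lambda>p q. a p \<bullet> a q"] that i
      unfolding cP_def C_def by simp
    thus ?thesis using pos by (metis (no_types) div_by_aux)
  qed
  have "(\<Sum>\<pi>\<in>?P. (norm (\<Sum>j<i. a (\<pi> j)))\<^sup>2)
      = (\<Sum>\<pi>\<in>?P. \<Sum>j<i. (norm (a (\<pi> j)))\<^sup>2 + (\<Sum>k\<in>{..<i}-{j}. a (\<pi> j) \<bullet> a (\<pi> k)))"
    by (simp add: sq_sum_expand)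
  also have "\<dots> = (\<Sum>j<i. (\<Sum>\<pi>\<in>?P. (norm (a (\<pi> j)))\<^sup>2)
                    + (\<Sum>k\<in>{..<i}-{j}. \<Sum>\<pi>\<in>?P. a (\<pi> j) \<bullet> a (\<pi> k)))"
    by (simp add: sum.distrib sum.swap[of _ ?P])
  also have "\<dots> = (\<Sum>j<i. cP * A / n + real (i - 1) * (cP * C / (real n * (real n - 1))))"
  proof (rule sum.cong[OF refl])
    fix j assume j: "j \<in> {..<i}"
    have "(\<Sum>k\<in>{..<i}-{j}. \<Sum>\<pi>\<in>?P. a (\<pi> j) \<bullet> a (\<pi> k))
        = (\<Sum>k\<in>{..<i}-{j}. cP * C / (real n * (real n - 1)))"
      using s2 j by (intro sum.cong refl) auto
    also have "\<dots> = real (card ({..<i}-{j})) * (cP * C / (real n * (real n - 1)))"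
      by simp
    also have "card ({..<i}-{j}) = i - 1" using j by simp
    finally show "(\<Sum>\<pi>\<in>?P. (norm (a (\<pi> j)))\<^sup>2)
                    + (\<Sum>k\<in>{..<i}-{j}. \<Sum>\<pi>\<in>?P. a (\<pi> j) \<bullet> a (\<pi> k))
        = cP * A / n + real (i - 1) * (cP * C / (real n * (real n - 1)))"
      using s1 j by simp
  qed
  also have "\<dots> = real i * (cP * A / n) + real i * real (i - 1) * (cP * C / (real n * (real n - 1)))"
    by (simp only: sum.distrib sum_constant card_lessThan ring_distribs mult.assoc)
  finally have E: "(\<Sum>\<pi>\<in>?P. (norm (\<Sum>j<i. a (\<pi> j)))\<^sup>2)
      = real i * (cP * A / n) + real i * real (i - 1) * (cP * C / (real n * (real n - 1)))" .
  have key: "real i * real (i - 1) * (C / (real n * (real n - 1))) \<le> (real i)\<^sup>2 / (real n)\<^sup>2 * B"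
  proof (cases "n = 1")
    case True
    hence "i * (i - 1) = 0" using i by (cases i) auto
    hence "real i * real (i - 1) = 0" by (metis of_nat_0 of_nat_mult)
    hence z: "real i * real (i - 1) * (C / (real n * (real n - 1))) = 0" by simp
    have "0 \<le> (real i)\<^sup>2 / (real n)\<^sup>2 * B" unfolding B_def by simp
    with z show ?thesis by linarith
  next
    case False
    hence n2: "n \<ge> 2" using n by simp
    have B0: "B \<ge> 0" unfolding B_def by simp
    have A0: "A \<ge> 0" unfolding A_def by (simp add: sum_nonneg)
    have CB: "C \<le> B" using BAC A0 by simp
    have x0: "real i * real (i - 1) \<ge> 0" by simp
    have nat1: "(i - 1) * n \<le> i * (n - 1)" using i n2
      by (cases i) (auto simp: algebra_simps)
    have "real ((i - 1) * n) \<le> real (i * (n - 1))" using nat1 by (rule of_nat_mono)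
    hence r1: "real (i - 1) * real n \<le> real i * (real n - 1)"
      using n2 by (simp add: of_nat_diff)
    have pos: "real n * (real n - 1) > 0" using n2 by simp
    have "real i * real (i - 1) * (C / (real n * (real n - 1))) \<le> real i * real (i - 1) * (B / (real n * (real n - 1)))"
      using CB pos x0 by (intro mult_left_mono divide_right_mono) auto
    also have "\<dots> \<le> (real i)\<^sup>2 / (real n)\<^sup>2 * B"
    proof -
      have m: "real i * B * (real (i - 1) * real n) \<le> real i * B * (real i * (real n - 1))"
        by (rule mult_left_mono[OF r1]) (simp add: B0)
      have e1: "real i * real (i - 1) * (B / (real n * (real n - 1)))
          = (real i * B * (real (i - 1) * real n)) / (real n * real n * (real n - 1))"
        using pos n2 by (simp add: field_simps)
      have e2: "(real i)\<^sup>2 / (real n)\<^sup>2 * B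
          = (real i * B * (real i * (real n - 1))) / (real n * real n * (real n - 1))"
        using pos n2 by (simp add: field_simps power2_eq_square)
      have "real n * real n * (real n - 1) > 0" using pos n2 by simp
      hence "(real i * B * (real (i - 1) * real n)) / (real n * real n * (real n - 1))
          \<le> (real i * B * (real i * (real n - 1))) / (real n * real n * (real n - 1))"
        using m by (intro divide_right_mono) auto
      thus ?thesis using e1 e2 by simp
    qed
    finally show ?thesis .
  qed
  have "real i * real (i - 1) * (cP * C / (real n * (real n - 1))) \<le> cP * ((real i)\<^sup>2 / (real n)\<^sup>2 * B)"
    using mult_left_mono[OF key cP0] by (simp add: algebra_simps)
  with E show ?thesis unfolding A_def B_def cP_def
    by (simp add: algebra_simps)
qed



lemma sum_i: "(\<Sum>i<n. real i) * 2 = real n * (real n - 1)"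
  by (induction n) (simp_all add: algebra_simps)

lemma sum_i2: "(\<Sum>i<n. (real i)\<^sup>2) * 6 = real n * (real n - 1) * (2 * real n - 1)"
  by (induction n) (simp_all add: algebra_simps power2_eq_square)

lemma det_bound:
  fixes G :: "nat \<Rightarrow> 'a::real_inner \<Rightarrow> 'a"
  assumes pp: "\<pi> permutes {..<n}"
    and sm: "\<And>k x y. k < n \<Longrightarrow> norm (G k x - G k y) \<le> L * norm (x - y)"
    and L: "L > 0" and g0: "\<gamma> > 0" and gl: "\<gamma> \<le> 1 / (2 * L * real n)" and n: "n \<ge> 1"
  shows "(\<Sum>i<n. (norm (xt - local_iter \<gamma> G \<pi> xt i))\<^sup>2)
       \<le> 8/3 * \<gamma>\<^sup>2 * (\<Sum>i<n. (norm (\<Sum>j<i. G (\<pi> j) xt))\<^sup>2)"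
proof -
  define x where "x j = local_iter \<gamma> G \<pi> xt j" for j
  define e where "e j = (norm (xt - x j))\<^sup>2" for j
  define W where "W i = (norm (\<Sum>j<i. G (\<pi> j) xt))\<^sup>2" for i
  define S where "S = (\<Sum>j<n. e j)"
  have e0: "e j \<ge> 0" for j unfolding e_def by simp
  have ei: "e i \<le> 2 * \<gamma>\<^sup>2 * L\<^sup>2 * real i * S + 2 * \<gamma>\<^sup>2 * W i" if i: "i < n" for i
  proof -
    define d where "d j = G (\<pi> j) (x j) - G (\<pi> j) xt" for j
    have "xt - x i = \<gamma> *\<^sub>R (\<Sum>j<i. G (\<pi> j) (x j))"
      unfolding x_def by (subst local_iter_sum) simp
    also have "(\<Sum>j<i. G (\<pi> j) (x j)) = (\<Sum>j<i. d j) + (\<Sum>j<i. G (\<pi> j) xt)"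
      unfolding d_def by (simp add: sum.distrib[symmetric])
    finally have "e i = \<gamma>\<^sup>2 * (norm ((\<Sum>j<i. d j) + (\<Sum>j<i. G (\<pi> j) xt)))\<^sup>2"
      unfolding e_def using g0 by (simp add: power_mult_distrib)
    also have "\<dots> \<le> \<gamma>\<^sup>2 * (2 * (norm (\<Sum>j<i. d j))\<^sup>2 + 2 * W i)"
      unfolding W_def by (intro mult_left_mono sq_add_le2) simp
    finally have c1: "e i \<le> \<gamma>\<^sup>2 * (2 * (norm (\<Sum>j<i. d j))\<^sup>2 + 2 * W i)" .
    have c2: "(norm (\<Sum>j<i. d j))\<^sup>2 \<le> real i * (\<Sum>j<i. (norm (d j))\<^sup>2)"
      using norm_sum_sq[of d "{..<i}"] by simp
    have "(\<Sum>j<i. (norm (d j))\<^sup>2) \<le> (\<Sum>j<i. L\<^sup>2 * e j)"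
    proof (rule sum_mono)
      fix j assume j: "j \<in> {..<i}"
      have "\<pi> j < n" using j i permutes_in_image[OF pp] by auto
      hence "norm (d j) \<le> L * norm (x j - xt)" unfolding d_def by (rule sm)
      hence "(norm (d j))\<^sup>2 \<le> (L * norm (x j - xt))\<^sup>2" by (simp add: power_mono)
      thus "(norm (d j))\<^sup>2 \<le> L\<^sup>2 * e j" unfolding e_def
        by (simp add: power_mult_distrib norm_minus_commute)
    qed
    also have "(\<Sum>j<i. L\<^sup>2 * e j) \<le> L\<^sup>2 * S"
      unfolding S_def sum_distrib_left[symmetric]
      using i e0 L by (intro mult_left_mono sum_mono2) auto
    finally have c3: "(\<Sum>j<i. (norm (d j))\<^sup>2) \<le> L\<^sup>2 * S" .
    have "real i * (\<Sum>j<i. (norm (d j))\<^sup>2) \<le> real i * (L\<^sup>2 * S)"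
      by (rule mult_left_mono[OF c3]) simp
    with c2 have c4: "(norm (\<Sum>j<i. d j))\<^sup>2 \<le> real i * (L\<^sup>2 * S)" by linarith
    have "\<gamma>\<^sup>2 * (2 * (norm (\<Sum>j<i. d j))\<^sup>2 + 2 * W i) \<le> \<gamma>\<^sup>2 * (2 * (real i * (L\<^sup>2 * S)) + 2 * W i)"
      using c4 by (intro mult_left_mono) auto
    with c1 show ?thesis by (simp add: algebra_simps)
  qed
  have "(\<Sum>j<n. e j) \<le> (\<Sum>i<n. 2 * \<gamma>\<^sup>2 * L\<^sup>2 * real i * S + 2 * \<gamma>\<^sup>2 * W i)"
    using ei by (intro sum_mono) auto
  hence "S \<le> (\<Sum>i<n. 2 * \<gamma>\<^sup>2 * L\<^sup>2 * real i * S + 2 * \<gamma>\<^sup>2 * W i)"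
    by (simp add: S_def)
  also have "\<dots> = 2 * \<gamma>\<^sup>2 * L\<^sup>2 * S * (\<Sum>i<n. real i) + 2 * \<gamma>\<^sup>2 * (\<Sum>i<n. W i)"
    by (simp add: sum.distrib sum_distrib_left sum_distrib_right algebra_simps)
  also have "2 * \<gamma>\<^sup>2 * L\<^sup>2 * S * (\<Sum>i<n. real i) = (\<gamma> * L * real n)\<^sup>2 * S - \<gamma>\<^sup>2 * L\<^sup>2 * real n * S"
  proof -
    have si: "(\<Sum>i<n. real i) = (real n * real n - real n) / 2"
      using sum_i[of n] by (simp add: algebra_simps)
    show ?thesis unfolding si by (simp add: power2_eq_square field_simps)
  qed
  finally have S1: "S \<le> (\<gamma> * L * real n)\<^sup>2 * S - \<gamma>\<^sup>2 * L\<^sup>2 * real n * S + 2 * \<gamma>\<^sup>2 * (\<Sum>i<n. W i)" .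
  have S0: "S \<ge> 0" unfolding S_def using e0 by (simp add: sum_nonneg)
  have "\<gamma> * L * real n \<le> 1/2"
    using gl L n g0 by (simp add: field_simps)
  moreover have "\<gamma> * L * real n \<ge> 0" using g0 L by simp
  ultimately have "(\<gamma> * L * real n)\<^sup>2 \<le> (1/2)\<^sup>2" by (intro power_mono)
  hence "(\<gamma> * L * real n)\<^sup>2 * S \<le> (1/2)\<^sup>2 * S" using S0 by (rule mult_right_mono)
  hence "(\<gamma> * L * real n)\<^sup>2 * S \<le> 1/4 * S" by (simp add: power2_eq_square)
  moreover have "\<gamma>\<^sup>2 * L\<^sup>2 * real n * S \<ge> 0" using S0 by simp
  ultimately have "S \<le> 1/4 * S + 2 * \<gamma>\<^sup>2 * (\<Sum>i<n. W i)" using S1 by linarith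
  hence "S \<le> 8/3 * \<gamma>\<^sup>2 * (\<Sum>i<n. W i)" by linarith
  thus ?thesis unfolding S_def e_def W_def x_def .
qed



lemma expect_unif_perm:
  "measure_pmf.expectation (unif_perm n) F
     = (\<Sum>\<pi>\<in>{\<pi>. \<pi> permutes {..<n}}. F \<pi>) / real (card {\<pi>. \<pi> permutes {..<n}})"
proof -
  have ne: "{\<pi>. \<pi> permutes {..<n}} \<noteq> {}" using permutes_id by blast
  have fin: "finite {\<pi>. \<pi> permutes {..<n}}" by (rule finite_permutations) simp
  show ?thesis unfolding unif_perm_def by (rule integral_pmf_of_set[OF ne fin])
qed

lemma per_m:
  fixes h :: "nat \<Rightarrow> 'a::euclidean_space \<Rightarrow> real" and G :: "nat \<Rightarrow> 'a \<Rightarrow> 'a"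
  assumes n: "n \<ge> 1" and L: "L > 0"
    and grad: "\<And>k x. k < n \<Longrightarrow> (h k has_derivative (\<lambda>v. G k x \<bullet> v)) (at x)"
    and cvx: "\<And>k. k < n \<Longrightarrow> convex_on UNIV (h k)"
    and sm: "\<And>k x y. k < n \<Longrightarrow> norm (G k x - G k y) \<le> L * norm (x - y)"
    and g0: "\<gamma> > 0" and gl: "\<gamma> \<le> 1 / (2 * L * real n)"
  shows "(1 / real n) * (\<Sum>i<n. measure_pmf.expectation (unif_perm n)
             (\<lambda>\<pi>. (norm (xt - local_iter \<gamma> G \<pi> xt i))\<^sup>2))
    \<le> 8 * \<gamma>\<^sup>2 * real n * L * (\<Sum>k<n. h k xt - h k xs - G k xs \<bullet> (xt - xs))
      + 2 * \<gamma>\<^sup>2 * (norm (\<Sum>k<n. G k xs))\<^sup>2 + 2 * \<gamma>\<^sup>2 * (\<Sum>k<n. (norm (G k xs))\<^sup>2)"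
proof -
  let ?P = "{\<pi>. \<pi> permutes {..<n}}"
  define cP where "cP = real (card ?P)"
  have "id \<in> ?P" by (simp add: permutes_id)
  hence "?P \<noteq> {}" by blast
  moreover have "finite ?P" by (rule finite_permutations) simp
  ultimately have cP: "cP > 0" unfolding cP_def by (simp add: card_gt_0_iff)
  define a where "a k = G k xt" for k
  define s where "s k = G k xs" for k
  define Ab where "Ab = (\<Sum>k<n. (norm (a k))\<^sup>2)"
  define B where "B = (norm (\<Sum>k<n. a k))\<^sup>2"
  define Ds where "Ds = (\<Sum>k<n. h k xt - h k xs - G k xs \<bullet> (xt - xs))"
  define Ss where "Ss = (\<Sum>k<n. (norm (s k))\<^sup>2)"
  define Ns where "Ns = (norm (\<Sum>k<n. s k))\<^sup>2"
  define e where "e i \<pi> = (norm (xt - local_iter \<gamma> G \<pi> xt i))\<^sup>2" for i \<pi>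
  define W where "W i \<pi> = (norm (\<Sum>j<i. a (\<pi> j)))\<^sup>2" for i :: nat and \<pi> :: "nat \<Rightarrow> nat"
  have br: "(norm (a k - s k))\<^sup>2 \<le> 2 * L * (h k xt - h k xs - G k xs \<bullet> (xt - xs))" if "k < n" for k
    unfolding a_def s_def
    by (rule bregman[OF cvx[OF that] grad[OF that] sm[OF that] L])
  have brs: "(\<Sum>k<n. (norm (a k - s k))\<^sup>2) \<le> 2 * L * Ds"
    unfolding Ds_def sum_distrib_left using br by (intro sum_mono) auto
  have Ds0: "Ds \<ge> 0"
  proof -
    have "0 \<le> (\<Sum>k<n. (norm (a k - s k))\<^sup>2)" by (simp add: sum_nonneg)
    with brs have "0 \<le> (2 * L) * Ds" by linarith
    thus ?thesis using L by (simp add: zero_le_mult_iff)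
  qed
  have Abd: "Ab \<le> 6 * L * Ds + 3/2 * Ss"
  proof -
    have "Ab \<le> (\<Sum>k<n. 3 * (norm (a k - s k))\<^sup>2 + 3/2 * (norm (s k))\<^sup>2)"
      unfolding Ab_def
    proof (rule sum_mono)
      fix k
      show "(norm (a k))\<^sup>2 \<le> 3 * (norm (a k - s k))\<^sup>2 + 3/2 * (norm (s k))\<^sup>2"
        using sq_add_le3[of "a k - s k" "s k"] by simp
    qed
    also have "\<dots> = 3 * (\<Sum>k<n. (norm (a k - s k))\<^sup>2) + 3/2 * Ss"
      unfolding Ss_def by (simp add: sum.distrib sum_distrib_left)
    finally show ?thesis using brs by linarith
  qed
  have Bd: "B \<le> 4 * real n * L * Ds + 2 * Ns"
  proof -
    have "(\<Sum>k<n. a k) = (\<Sum>k<n. a k - s k) + (\<Sum>k<n. s k)"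
      by (simp add: sum_subtractf)
    hence "B \<le> 2 * (norm (\<Sum>k<n. a k - s k))\<^sup>2 + 2 * Ns"
      unfolding B_def Ns_def using sq_add_le2 by metis
    moreover have "(norm (\<Sum>k<n. a k - s k))\<^sup>2 \<le> real n * (\<Sum>k<n. (norm (a k - s k))\<^sup>2)"
      using norm_sum_sq[of "\<lambda>k. a k - s k" "{..<n}"] by simp
    moreover have "real n * (\<Sum>k<n. (norm (a k - s k))\<^sup>2) \<le> real n * (2 * L * Ds)"
      using brs by (intro mult_left_mono) auto
    ultimately show ?thesis by (simp add: algebra_simps)
  qed
  have "(\<Sum>i<n. measure_pmf.expectation (unif_perm n) (e i))
      = (\<Sum>\<pi>\<in>?P. \<Sum>i<n. e i \<pi>) / cP"
    unfolding expect_unif_perm cP_def by (simp add: sum_divide_distrib[symmetric] sum.swap[of _ ?P])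
  also have "\<dots> \<le> (\<Sum>\<pi>\<in>?P. 8/3 * \<gamma>\<^sup>2 * (\<Sum>i<n. W i \<pi>)) / cP"
    unfolding e_def W_def a_def
    using det_bound[OF _ sm L g0 gl n] cP
    by (intro divide_right_mono sum_mono) auto
  also have "\<dots> = 8/3 * \<gamma>\<^sup>2 * (\<Sum>i<n. (\<Sum>\<pi>\<in>?P. W i \<pi>) / cP)"
    by (simp add: sum_distrib_left sum_divide_distrib[symmetric] sum.swap[of _ ?P])
  also have "(\<Sum>i<n. (\<Sum>\<pi>\<in>?P. W i \<pi>) / cP)
      \<le> (\<Sum>i<n. real i / real n * Ab + (real i)\<^sup>2 / (real n)\<^sup>2 * B)"
  proof (rule sum_mono)
    fix i assume "i \<in> {..<n}"
    hence "i \<le> n" by simp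
    from perm_var[OF this n, of a] cP
    show "(\<Sum>\<pi>\<in>?P. W i \<pi>) / cP \<le> real i / real n * Ab + (real i)\<^sup>2 / (real n)\<^sup>2 * B"
      unfolding W_def Ab_def B_def cP_def by (simp add: pos_divide_le_eq mult.commute)
  qed
  also have "(\<Sum>i<n. real i / real n * Ab + (real i)\<^sup>2 / (real n)\<^sup>2 * B)
      = (\<Sum>i<n. real i) * Ab / real n + (\<Sum>i<n. (real i)\<^sup>2) * B / (real n)\<^sup>2"
    by (simp add: sum.distrib sum_distrib_right sum_divide_distrib[symmetric])
  finally have X: "(\<Sum>i<n. measure_pmf.expectation (unif_perm n) (e i))
     \<le> 8/3 * \<gamma>\<^sup>2 * ((\<Sum>i<n. real i) * Ab / real n + (\<Sum>i<n. (real i)\<^sup>2) * B / (real n)\<^sup>2)"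
    using g0 by (simp add: mult_left_mono)
  have n0: "real n > 0" using n by simp
  have B0: "B \<ge> 0" unfolding B_def by simp
  have Ab0: "Ab \<ge> 0" unfolding Ab_def by (simp add: sum_nonneg)
  have si: "(\<Sum>i<n. real i) = real n * (real n - 1) / 2" using sum_i[of n] by simp
  have t1: "(\<Sum>i<n. real i) * Ab / real n = (real n - 1) / 2 * Ab"
    unfolding si using n0 by (simp add: field_simps)
  have si2: "(\<Sum>i<n. (real i)\<^sup>2) = real n * ((real n - 1) * (2 * real n - 1)) / 6"
    using sum_i2[of n] by (simp add: mult.assoc)
  have q2: "(real n - 1) * (2 * real n - 1) \<le> 2 * (real n)\<^sup>2"
    using n0 by (simp add: algebra_simps power2_eq_square)
  have "(\<Sum>i<n. (real i)\<^sup>2) \<le> real n * (2 * (real n)\<^sup>2) / 6"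
    unfolding si2 using q2 n0 by (intro divide_right_mono mult_left_mono) auto
  hence "(\<Sum>i<n. (real i)\<^sup>2) * B \<le> real n * (2 * (real n)\<^sup>2) / 6 * B"
    using B0 by (rule mult_right_mono)
  hence t2: "(\<Sum>i<n. (real i)\<^sup>2) * B / (real n)\<^sup>2 \<le> real n / 3 * B"
    using n0 by (simp add: field_simps power2_eq_square)
  have "(\<Sum>i<n. measure_pmf.expectation (unif_perm n) (e i))
     \<le> 8/3 * \<gamma>\<^sup>2 * ((real n - 1) / 2 * Ab + real n / 3 * B)"
  proof -
    have "(\<Sum>i<n. real i) * Ab / real n + (\<Sum>i<n. (real i)\<^sup>2) * B / (real n)\<^sup>2
        \<le> (real n - 1) / 2 * Ab + real n / 3 * B" using t1 t2 by linarith
    hence "8/3 * \<gamma>\<^sup>2 * ((\<Sum>i<n. real i) * Ab / real n + (\<Sum>i<n. (real i)\<^sup>2) * B / (real n)\<^sup>2)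
        \<le> 8/3 * \<gamma>\<^sup>2 * ((real n - 1) / 2 * Ab + real n / 3 * B)"
      by (intro mult_left_mono) auto
    with X show ?thesis by linarith
  qed
  hence "(1 / real n) * (\<Sum>i<n. measure_pmf.expectation (unif_perm n) (e i))
     \<le> (1 / real n) * (8/3 * \<gamma>\<^sup>2 * ((real n - 1) / 2 * Ab + real n / 3 * B))"
    using n0 by (intro mult_left_mono) auto
  also have "\<dots> = \<gamma>\<^sup>2 * (4/3 * ((real n - 1) / real n) * Ab + 8/9 * B)"
    using n0 by (simp add: field_simps)
  finally have Y: "(1 / real n) * (\<Sum>i<n. measure_pmf.expectation (unif_perm n) (e i))
     \<le> \<gamma>\<^sup>2 * (4/3 * ((real n - 1) / real n) * Ab + 8/9 * B)" .
  define q where "q = (real n - 1) / real n"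
  have q0: "q \<ge> 0" "q \<le> 1" unfolding q_def using n0 n by (auto simp: field_simps)
  have "q * Ab \<le> q * (6 * L * Ds + 3/2 * Ss)" using Abd q0(1) by (rule mult_left_mono)
  moreover have "q * Ss \<le> Ss" using q0 by (simp add: Ss_def sum_nonneg mult_left_le_one_le)
  moreover have "8 * q * (L * Ds) + 32/9 * real n * (L * Ds) \<le> 8 * real n * (L * Ds)"
  proof -
    have LD: "L * Ds \<ge> 0" using L Ds0 by simp
    have "8 * q + 32/9 * real n \<le> 8 * real n"
    proof (cases "n = 1")
      case True thus ?thesis unfolding q_def by simp
    next
      case False hence "real n \<ge> 2" using n by simp
      thus ?thesis using q0 by simp
    qed
    from mult_right_mono[OF this LD] show ?thesis by (simp add: algebra_simps)
  qed
  moreover have "Ns \<ge> 0" unfolding Ns_def by simp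
  ultimately have Z: "4/3 * q * Ab + 8/9 * B \<le> 8 * real n * L * Ds + 2 * Ns + 2 * Ss"
    using Bd by (simp add: algebra_simps)
  have "\<gamma>\<^sup>2 * (4/3 * q * Ab + 8/9 * B) \<le> \<gamma>\<^sup>2 * (8 * real n * L * Ds + 2 * Ns + 2 * Ss)"
    using Z by (intro mult_left_mono) auto
  with Y show ?thesis unfolding q_def e_def Ds_def Ns_def Ss_def s_def
    by (simp add: algebra_simps)
qed



theorem mainTheorem6:
  fixes f :: "nat \<Rightarrow> nat \<Rightarrow> 'a::euclidean_space \<Rightarrow> real"
    and g :: "nat \<Rightarrow> nat \<Rightarrow> 'a \<Rightarrow> 'a"
    and M n :: nat and L \<gamma> :: real and xt xs :: 'a
  assumes M_pos: "M \<ge> 1" and n_pos: "n \<ge> 1" and L_pos: "L > 0"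
    and grad: "\<And>m i x. m < M \<Longrightarrow> i < n \<Longrightarrow>
                 (f m i has_derivative (\<lambda>h. g m i x \<bullet> h)) (at x)"
    and cvx: "\<And>m i. m < M \<Longrightarrow> i < n \<Longrightarrow> convex_on UNIV (f m i)"
    and smooth: "\<And>m i x y. m < M \<Longrightarrow> i < n \<Longrightarrow>
                 norm (g m i x - g m i y) \<le> L * norm (x - y)"
    and minimizer: "\<And>y. (1 / real M) * (\<Sum>m<M. (1 / real n) * (\<Sum>i<n. f m i xs))
                       \<le> (1 / real M) * (\<Sum>m<M. (1 / real n) * (\<Sum>i<n. f m i y))"
    and gamma_pos: "\<gamma> > 0" and gamma_le: "\<gamma> \<le> 1 / (2 * L * real n)"
  shows "(1 / (real M * real n)) *
           (\<Sum>m<M. \<Sum>i<n. measure_pmf.expectation (unif_perm n)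
               (\<lambda>\<pi>. (norm (xt - local_iter \<gamma> (g m) \<pi> xt i))\<^sup>2))
         \<le> 8 * \<gamma>\<^sup>2 * (real n)\<^sup>2 * L *
              ((1 / real M) * (\<Sum>m<M. (1 / real n) * (\<Sum>i<n. f m i xt))
               - (1 / real M) * (\<Sum>m<M. (1 / real n) * (\<Sum>i<n. f m i xs)))
           + 2 * \<gamma>\<^sup>2 * (real n)\<^sup>2 * ((1 / real M) *
                (\<Sum>m<M. (norm ((1 / real n) *\<^sub>R (\<Sum>i<n. g m i xs)))\<^sup>2))
           + 2 * \<gamma>\<^sup>2 * real n * ((1 / real M) *
                (\<Sum>m<M. (1 / real n) * (\<Sum>i<n. (norm (g m i xs))\<^sup>2)))"
proof -
  have M0: "real M > 0" and n0: "real n > 0" using M_pos n_pos by auto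
  define F where "F y = (\<Sum>m<M. \<Sum>i<n. f m i y)" for y
  define GF where "GF y = (\<Sum>m<M. \<Sum>i<n. g m i y)" for y
  define GS where "GS = GF xs"
  have Fe: "(1 / real M) * (\<Sum>m<M. (1 / real n) * (\<Sum>i<n. f m i y)) = F y / (real M * real n)" for y
    unfolding F_def by (simp add: sum_divide_distrib[symmetric] divide_divide_eq_left mult.commute)
  have Fmin: "F xs \<le> F y" for y
  proof -
    have "F xs / (real M * real n) \<le> F y / (real M * real n)" using minimizer[of y] by (simp only: Fe)
    thus ?thesis using M0 n0 by (simp add: divide_le_cancel)
  qed
  have dF: "(F has_derivative (\<lambda>v. GF x \<bullet> v)) (at x)" for x
    unfolding F_def GF_def inner_sum_left
    by (intro has_derivative_sum grad) auto
  have "((\<lambda>t. F (xs + t *\<^sub>R GS)) has_real_derivative (GF (xs + 0 *\<^sub>R GS) \<bullet> GS)) (at 0)"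
    by (rule line_deriv[OF dF])
  hence D: "((\<lambda>t. F (xs + t *\<^sub>R GS)) has_real_derivative (GS \<bullet> GS)) (at 0)"
    unfolding GS_def by simp
  have "GS \<bullet> GS = 0"
    by (rule DERIV_local_min[OF D, of 1]) (auto intro: Fmin)
  hence GS0: "GS = 0" by simp
  define R where "R m = 8 * \<gamma>\<^sup>2 * real n * L * (\<Sum>k<n. f m k xt - f m k xs - g m k xs \<bullet> (xt - xs))
      + 2 * \<gamma>\<^sup>2 * (norm (\<Sum>k<n. g m k xs))\<^sup>2 + 2 * \<gamma>\<^sup>2 * (\<Sum>k<n. (norm (g m k xs))\<^sup>2)" for m
  have pm: "(1 / real n) * (\<Sum>i<n. measure_pmf.expectation (unif_perm n)
             (\<lambda>\<pi>. (norm (xt - local_iter \<gamma> (g m) \<pi> xt i))\<^sup>2)) \<le> R m" if m: "m < M" for m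
    unfolding R_def
    by (rule per_m[OF n_pos L_pos grad[OF m] cvx[OF m] smooth[OF m] gamma_pos gamma_le])
  have "(1 / (real M * real n)) *
           (\<Sum>m<M. \<Sum>i<n. measure_pmf.expectation (unif_perm n)
               (\<lambda>\<pi>. (norm (xt - local_iter \<gamma> (g m) \<pi> xt i))\<^sup>2))
      = (1 / real M) * (\<Sum>m<M. (1 / real n) * (\<Sum>i<n. measure_pmf.expectation (unif_perm n)
               (\<lambda>\<pi>. (norm (xt - local_iter \<gamma> (g m) \<pi> xt i))\<^sup>2)))"
    by (simp add: sum_distrib_left)
  also have "\<dots> \<le> (1 / real M) * (\<Sum>m<M. R m)"
    using pm M0 by (intro mult_left_mono sum_mono) auto
  also have "(\<Sum>m<M. R m) = 8 * \<gamma>\<^sup>2 * real n * L * (F xt - F xs)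
      + 2 * \<gamma>\<^sup>2 * (\<Sum>m<M. (norm (\<Sum>k<n. g m k xs))\<^sup>2)
      + 2 * \<gamma>\<^sup>2 * (\<Sum>m<M. \<Sum>k<n. (norm (g m k xs))\<^sup>2)"
  proof -
    have lin: "(\<Sum>m<M. \<Sum>k<n. g m k xs \<bullet> (xt - xs)) = 0"
      using GS0 unfolding GS_def GF_def by (simp add: inner_sum_left[symmetric])
    have "(\<Sum>m<M. \<Sum>k<n. f m k xt - f m k xs - g m k xs \<bullet> (xt - xs))
        = F xt - F xs - (\<Sum>m<M. \<Sum>k<n. g m k xs \<bullet> (xt - xs))"
      unfolding F_def by (simp add: sum_subtractf)
    with lin have "(\<Sum>m<M. \<Sum>k<n. f m k xt - f m k xs - g m k xs \<bullet> (xt - xs)) = F xt - F xs"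
      by simp
    thus ?thesis unfolding R_def
      by (simp add: sum.distrib sum_distrib_left[symmetric])
  qed
  also have "(1 / real M) * (8 * \<gamma>\<^sup>2 * real n * L * (F xt - F xs)
      + 2 * \<gamma>\<^sup>2 * (\<Sum>m<M. (norm (\<Sum>k<n. g m k xs))\<^sup>2)
      + 2 * \<gamma>\<^sup>2 * (\<Sum>m<M. \<Sum>k<n. (norm (g m k xs))\<^sup>2))
    = 8 * \<gamma>\<^sup>2 * (real n)\<^sup>2 * L *
              ((1 / real M) * (\<Sum>m<M. (1 / real n) * (\<Sum>i<n. f m i xt))
               - (1 / real M) * (\<Sum>m<M. (1 / real n) * (\<Sum>i<n. f m i xs)))
           + 2 * \<gamma>\<^sup>2 * (real n)\<^sup>2 * ((1 / real M) *
                (\<Sum>m<M. (norm ((1 / real n) *\<^sub>R (\<Sum>i<n. g m i xs)))\<^sup>2))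
           + 2 * \<gamma>\<^sup>2 * real n * ((1 / real M) *
                (\<Sum>m<M. (1 / real n) * (\<Sum>i<n. (norm (g m i xs))\<^sup>2)))"
  proof -
    have a1: "(\<Sum>m<M. (norm ((1 / real n) *\<^sub>R (\<Sum>i<n. g m i xs)))\<^sup>2)
        = (\<Sum>m<M. (norm (\<Sum>i<n. g m i xs))\<^sup>2) / (real n)\<^sup>2"
      using n0 by (simp add: sum_divide_distrib power_mult_distrib power_divide)
    have a2: "(\<Sum>m<M. (1 / real n) * (\<Sum>i<n. (norm (g m i xs))\<^sup>2))
        = (\<Sum>m<M. \<Sum>i<n. (norm (g m i xs))\<^sup>2) / real n"
      by (simp add: sum_divide_distrib)
    show ?thesis unfolding a1 a2 Fe using n0 M0
      by (simp add: field_simps power2_eq_square)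
  qed
  finally show ?thesis .
qed

end
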